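(* Let $A$ be an $n\times n$ row substochastic matrix with at most one positive entry in each row. (1) If $A$ has an even number $2t$ of positive entries, then there is a listing $x_1,\dots,x_{2t}$ of these positive entries (each entry listed exactly once) such that $$\operatorname{per}(I-A)\le (1+x_1x_2)(1+x_3x_4)\cdots(1+x_{2t-1}x_{2t}).$$ (2) If $A$ has an odd number $2t+1$ of positive entries, then there is a listing $x_1,\dots,x_{2t+1}$ of these positive entries such that $$\operatorname{per}(I-A)< (1+x_1x_2)(1+x_3x_4)\cdots(1+x_{2t-1}x_{2t})\Big(1+\frac{x_{2t+1}^2}{4}\Big).$$
   Context: An $n\times n$ matrix is row substochastic if all its entries are nonnegative and each row sum is at most $1$. The permanent is $\operatorname{per}(M)=\sum_{\pi\in S_n}\prod_i m_{i\pi(i)}$, and $I$ is the identity matrix. Empty products equal $1$. *)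

theory Defs
  imports Complex_Main "HOL-Combinatorics.Permutations"
begin

text \<open>Square matrices of size n are functions nat => nat => real, indexed by i, j < n.\<close>

definition per :: "nat \<Rightarrow> (nat \<Rightarrow> nat \<Rightarrow> real) \<Rightarrow> real" where
  "per n M = (\<Sum>p \<in> {p. p permutes {..<n}}. \<Prod>i<n. M i (p i))"

definition idm :: "nat \<Rightarrow> nat \<Rightarrow> real" where
  "idm i j = (if i = j then 1 else 0)"

definition row_substochastic :: "nat \<Rightarrow> (nat \<Rightarrow> nat \<Rightarrow> real) \<Rightarrow> bool" where
  "row_substochastic n A \<longleftrightarrow>
     (\<forall>i<n. \<forall>j<n. 0 \<le> A i j) \<and> (\<forall>i<n. (\<Sum>j<n. A i j) \<le> 1)"

definition pos_entries :: "nat \<Rightarrow> (nat \<Rightarrow> nat \<Rightarrow> real) \<Rightarrow> (nat \<times> nat) set" where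
  "pos_entries n A = {(i, j). i < n \<and> j < n \<and> 0 < A i j}"

definition pair_prod :: "(nat \<Rightarrow> nat \<Rightarrow> real) \<Rightarrow> (nat \<times> nat) list \<Rightarrow> nat \<Rightarrow> real" where
  "pair_prod A ps t = (\<Prod>k<t. 1 + A (fst (ps ! (2*k))) (snd (ps ! (2*k)))
                                  * A (fst (ps ! (2*k+1))) (snd (ps ! (2*k+1))))"

end

theory Submission
  imports Defs
begin

definition perS :: "nat set \<Rightarrow> (nat \<Rightarrow> nat \<Rightarrow> real) \<Rightarrow> real" where
  "perS S M = (\<Sum>p \<in> {p. p permutes S}. \<Prod>i\<in>S. M i (p i))"

lemma comp_perm_facts:
  assumes p1: "p1 permutes T" and p2: "p2 permutes (S - T)" and TS: "T \<subseteq> S"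
  shows "(p1 \<circ> p2) permutes S" "\<And>x. x \<in> T \<Longrightarrow> (p1 \<circ> p2) x = p1 x"
        "\<And>x. x \<notin> T \<Longrightarrow> (p1 \<circ> p2) x = p2 x"
proof -
  show "(p1 \<circ> p2) permutes S"
    by (rule permutes_compose[OF permutes_subset[OF p2] permutes_subset[OF p1 TS]]) auto
  show "\<And>x. x \<in> T \<Longrightarrow> (p1 \<circ> p2) x = p1 x"
    using p2 by (simp add: permutes_not_in)
  show "(p1 \<circ> p2) x = p2 x" if "x \<notin> T" for x
  proof -
    have "p2 x \<notin> T"
    proof (cases "x \<in> S - T")
      case True then show ?thesis using permutes_in_image[OF p2] by auto
    next
      case False then show ?thesis using p2 that by (simp add: permutes_not_in)
    qed
    then show ?thesis using p1 by (simp add: permutes_not_in)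
  qed
qed

lemma perS_block:
  assumes fin: "finite S" and TS: "T \<subseteq> S" and z: "\<forall>i\<in>T. \<forall>j\<in>S-T. M i j = 0"
  shows "perS S M = perS T M * perS (S-T) M"
proof -
  define F where "F p = (\<Prod>i\<in>S. M i (p i))" for p
  define Q where "Q = {p. p permutes S \<and> (\<forall>x\<in>T. p x \<in> T)}"
  have finT: "finite T" using fin TS finite_subset by blast
  have "perS S M = sum F Q"
    unfolding perS_def F_def[symmetric]
  proof (rule sum.mono_neutral_right)
    show "finite {p. p permutes S}" using fin by (rule finite_permutations)
    show "Q \<subseteq> {p. p permutes S}" unfolding Q_def by auto
    show "\<forall>p\<in>{p. p permutes S} - Q. F p = 0"
    proof
      fix p assume "p \<in> {p. p permutes S} - Q"
      then obtain x where p: "p permutes S" and x: "x \<in> T" "p x \<notin> T" unfolding Q_def by auto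
      have "p x \<in> S" using permutes_in_image[OF p] x TS by auto
      then have "M x (p x) = 0" using z x by auto
      then show "F p = 0" unfolding F_def using fin x TS by (intro prod_zero) auto
    qed
  qed
  also have "\<dots> = (\<Sum>pp\<in>{p. p permutes T} \<times> {p. p permutes (S-T)}. F (fst pp \<circ> snd pp))"
  proof (rule sum.reindex_bij_witness[symmetric, where i="\<lambda>p. (restrict_id p T, restrict_id p (S-T))"
        and j="\<lambda>pp. fst pp \<circ> snd pp"])
    fix pp assume "pp \<in> {p. p permutes T} \<times> {p. p permutes (S-T)}"
    then obtain p1 p2 where pp: "pp = (p1,p2)" "p1 permutes T" "p2 permutes (S-T)" by auto
    note f = comp_perm_facts[OF pp(2) pp(3) TS]
    show "(restrict_id (fst pp \<circ> snd pp) T, restrict_id (fst pp \<circ> snd pp) (S - T)) = pp"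
      using f pp by (auto simp: fun_eq_iff restrict_id_def permutes_not_in)
    show "fst pp \<circ> snd pp \<in> Q" using f pp permutes_in_image[OF pp(2)] unfolding Q_def by auto
  next
    fix p assume "p \<in> Q"
    then have p: "p permutes S" and pT: "\<forall>x\<in>T. p x \<in> T" unfolding Q_def by auto
    have injp: "inj_on p X" for X using permutes_inj[OF p] by (simp add: inj_on_def inj_def)
    have img: "p ` T = T" using endo_inj_surj[OF finT _ injp] pT by auto
    have pST: "p x \<in> S - T" if "x \<in> S - T" for x
    proof -
      have "p x \<in> S" using permutes_in_image[OF p] that by auto
      moreover have "p x \<notin> T"
      proof
        assume "p x \<in> T"
        then obtain y where "y \<in> T" "p y = p x" using img by (metis imageE)
        then have "y = x" using permutes_inj[OF p] by (simp add: inj_def)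
        then show False using that \<open>y \<in> T\<close> by auto
      qed
      ultimately show ?thesis by auto
    qed
    have r1: "restrict_id p T permutes T"
      by (rule inj_imp_permutes) (use finT pT injp in \<open>auto simp: restrict_id_def inj_on_def\<close>)
    have r2: "restrict_id p (S-T) permutes (S-T)"
      by (rule inj_imp_permutes) (use fin pST injp in \<open>auto simp: restrict_id_def inj_on_def\<close>)
    have "restrict_id p T \<circ> restrict_id p (S-T) = p"
    proof
      fix x show "(restrict_id p T \<circ> restrict_id p (S - T)) x = p x"
        using pST[of x] p by (cases "x \<in> T"; cases "x \<in> S") (auto simp: restrict_id_def permutes_not_in)
    qed
    then show "fst (restrict_id p T, restrict_id p (S - T)) \<circ> snd (restrict_id p T, restrict_id p (S - T)) = p"
      by simp
    show "(restrict_id p T, restrict_id p (S - T)) \<in> {p. p permutes T} \<times> {p. p permutes (S - T)}"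
      using r1 r2 by auto
  qed simp
  also have "\<dots> = (\<Sum>pp\<in>{p. p permutes T} \<times> {p. p permutes (S-T)}.
                    (\<Prod>i\<in>T. M i (fst pp i)) * (\<Prod>i\<in>S-T. M i (snd pp i)))"
  proof (rule sum.cong[OF refl])
    fix pp assume "pp \<in> {p. p permutes T} \<times> {p. p permutes (S-T)}"
    then obtain p1 p2 where pp: "pp = (p1,p2)" "p1 permutes T" "p2 permutes (S-T)" by auto
    note f = comp_perm_facts[OF pp(2) pp(3) TS]
    have "F (p1 \<circ> p2) = (\<Prod>i\<in>T. M i ((p1 \<circ> p2) i)) * (\<Prod>i\<in>S-T. M i ((p1 \<circ> p2) i))"
      unfolding F_def using prod.subset_diff[OF TS fin] by (simp add: mult.commute)
    also have "\<dots> = (\<Prod>i\<in>T. M i (p1 i)) * (\<Prod>i\<in>S-T. M i (p2 i))"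
      using f by (intro arg_cong2[where f="(*)"] prod.cong) auto
    finally show "F (fst pp \<circ> snd pp) = (\<Prod>i\<in>T. M i (fst pp i)) * (\<Prod>i\<in>S-T. M i (snd pp i))"
      using pp by simp
  qed
  also have "\<dots> = perS T M * perS (S-T) M"
    unfolding perS_def sum_product sum.cartesian_product by (simp add: case_prod_beta)
  finally show ?thesis .
qed

lemma pair_prod_ge1:
  assumes "2*m \<le> length L" "\<forall>x\<in>set L. 0 \<le> A (fst x) (snd x)"
  shows "1 \<le> pair_prod A L m"
  unfolding pair_prod_def
proof (rule prod_ge_1)
  fix k assume "k \<in> {..<m}"
  then have "2*k < length L" "2*k+1 < length L" using assms(1) by auto
  then have "0 \<le> A (fst (L ! (2*k))) (snd (L ! (2*k)))" "0 \<le> A (fst (L ! (2*k+1))) (snd (L ! (2*k+1)))"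
    using assms(2) nth_mem by blast+
  then show "1 \<le> 1 + A (fst (L ! (2*k))) (snd (L ! (2*k))) * A (fst (L ! (2*k+1))) (snd (L ! (2*k+1)))"
    by simp
qed

lemma pair_prod_cons2:
  "pair_prod A (a # b # L) (Suc m) = (1 + A (fst a) (snd a) * A (fst b) (snd b)) * pair_prod A L m"
  unfolding pair_prod_def prod.lessThan_Suc_shift by simp

lemma prod_split_lt:
  fixes f :: "nat \<Rightarrow> real"
  shows "m \<le> t \<Longrightarrow> (\<Prod>k<t. f k) = (\<Prod>k<m. f k) * (\<Prod>k\<in>{m..<t}. f k)"
proof -
  assume "m \<le> t"
  then have "{..<t} = {..<m} \<union> {m..<t}" by auto
  then show ?thesis by (simp add: prod.union_disjoint[symmetric] ivl_disj_int_one(2))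
qed

lemma pair_prod_ext:
  assumes "length L = 2*m" "m \<le> t" "2*t \<le> length (L @ R)"
    "\<forall>x\<in>set (L @ R). 0 \<le> A (fst x) (snd x)"
  shows "pair_prod A L m \<le> pair_prod A (L @ R) t"
proof -
  define f where "f k = 1 + A (fst ((L@R) ! (2*k))) (snd ((L@R) ! (2*k)))
                                  * A (fst ((L@R) ! (2*k+1))) (snd ((L@R) ! (2*k+1)))" for k
  have "pair_prod A (L @ R) t = (\<Prod>k<m. f k) * (\<Prod>k\<in>{m..<t}. f k)"
    unfolding pair_prod_def f_def by (rule prod_split_lt[OF assms(2)])
  moreover have "(\<Prod>k<m. f k) = pair_prod A L m"
    unfolding pair_prod_def f_def using assms(1) by (intro prod.cong) (auto simp: nth_append)
  moreover have "1 \<le> (\<Prod>k\<in>{m..<t}. f k)"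
  proof (rule prod_ge_1)
    fix k assume "k \<in> {m..<t}"
    then have "2*k < length (L@R)" "2*k+1 < length (L@R)" using assms(3) by auto
    then have "0 \<le> A (fst ((L@R) ! (2*k))) (snd ((L@R) ! (2*k)))"
      "0 \<le> A (fst ((L@R) ! (2*k+1))) (snd ((L@R) ! (2*k+1)))"
      using assms(4) nth_mem by blast+
    then show "1 \<le> f k" unfolding f_def by simp
  qed
  moreover have "1 \<le> pair_prod A L m"
    using assms by (intro pair_prod_ge1) auto
  ultimately show ?thesis by (simp add: mult_le_cancel_left1)
qed

lemma periodic_point:
  assumes "finite S" "a \<in> S" "\<forall>x\<in>S. g x \<in> S"
  shows "\<exists>c\<in>S. \<exists>L>0. (g ^^ L) c = c"
proof -
  have inS: "(g ^^ k) a \<in> S" for k by (induction k) (use assms in auto)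
  have "\<not> inj_on (\<lambda>k. (g ^^ k) a) {..card S}"
  proof
    assume "inj_on (\<lambda>k. (g ^^ k) a) {..card S}"
    then have "card ((\<lambda>k. (g ^^ k) a) ` {..card S}) = Suc (card S)" by (simp add: card_image)
    moreover have "card ((\<lambda>k. (g ^^ k) a) ` {..card S}) \<le> card S"
      using inS assms(1) by (intro card_mono) auto
    ultimately show False by simp
  qed
  then obtain k1 k2 where k: "k1 < k2" "(g ^^ k1) a = (g ^^ k2) a"
    unfolding inj_on_def by (metis linorder_neqE_nat)
  have "(g ^^ (k2 - k1)) ((g ^^ k1) a) = (g ^^ k2) a"
    using k(1) funpow_add[of "k2 - k1" k1 g] by simp
  then show ?thesis using k inS by (intro bexI[of _ "(g ^^ k1) a"] exI[of _ "k2 - k1"]) auto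
qed

lemma funpow_period: "(g ^^ L) c = c \<Longrightarrow> (g ^^ (L*k)) c = c"
  by (induction k) (auto simp: funpow_add)

lemma cycle_perS:
  fixes A :: "nat \<Rightarrow> nat \<Rightarrow> real"
  assumes fin: "finite C" and Cdef: "C = range (\<lambda>k. (g ^^ k) c)"
    and L: "L > 0" "(g ^^ L) c = c" and gc: "g c \<noteq> c"
    and nonneg: "\<forall>i\<in>C. \<forall>j\<in>C. 0 \<le> A i j \<and> A i j \<le> 1"
    and uniq: "\<forall>i\<in>C. \<forall>j\<in>C. 0 < A i j \<longrightarrow> j = g i"
  shows "0 \<le> perS C (\<lambda>i j. idm i j - A i j) \<and>
         perS C (\<lambda>i j. idm i j - A i j) \<le> (if even (card C) then 1 + A c (g c) * A (g c) (g (g c)) else 1)"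
proof -
  define M where "M = (\<lambda>i j. idm i j - A i j)"
  define F where "F p = (\<Prod>i\<in>C. M i (p i))" for p
  have cC: "c \<in> C" unfolding Cdef by (metis funpow_0 rangeI)
  have closed: "g x \<in> C" if "x \<in> C" for x
  proof -
    obtain k where "x = (g ^^ k) c" using \<open>x \<in> C\<close> Cdef by auto
    then have "g x = (g ^^ Suc k) c" by simp
    then show ?thesis unfolding Cdef by (metis rangeI)
  qed
  have iterC: "(g ^^ m) x \<in> C" if "x \<in> C" for x m
    by (induction m) (use that closed in auto)
  have reach: "\<exists>m. (g ^^ m) y = c" if "y \<in> C" for y
  proof -
    obtain k where k: "y = (g ^^ k) c" using \<open>y \<in> C\<close> Cdef by auto
    have "(g ^^ ((L - 1) * k)) y = (g ^^ ((L - 1) * k + k)) c" using k by (simp add: funpow_add)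
    also have "(L - 1) * k + k = L * k" using L(1) by (cases L) auto
    finally show ?thesis using funpow_period[OF L(2)] by metis
  qed
  have noloop: "g x \<noteq> x" if "x \<in> C" for x
  proof
    assume gx: "g x = x"
    have "(g ^^ m) x = x" for m by (induction m) (use gx in auto)
    then show False using reach[OF that] gx gc by metis
  qed
  have Axx: "A x x = 0" if "x \<in> C" for x
    using nonneg uniq noloop that by force
  define gC where "gC = restrict_id g C"
  have char: "p = id \<or> p = gC" if p: "p permutes C" and Fp: "F p \<noteq> 0" for p
  proof -
    have nz: "M x (p x) \<noteq> 0" if "x \<in> C" for x
      using Fp fin that unfolding F_def by (metis prod_zero)
    have opts: "p x = x \<or> p x = g x" if "x \<in> C" for x
    proof (rule ccontr)
      assume nn: "\<not> (p x = x \<or> p x = g x)"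
      moreover have "p x \<in> C" using permutes_in_image[OF p] that by auto
      ultimately have "A x (p x) = 0" using nonneg uniq that by force
      then show False using nz[OF that] nn by (simp add: M_def idm_def)
    qed
    have propg: "p ((g ^^ m) y) = g ((g ^^ m) y)" if "y \<in> C" "p y = g y" for y m
    proof (induction m)
      case 0 then show ?case using that by simp
    next
      case (Suc m)
      define z where "z = (g ^^ m) y"
      have zC: "z \<in> C" unfolding z_def using iterC that by auto
      have w: "(g ^^ Suc m) y = g z" unfolding z_def by simp
      have "p (g z) \<noteq> g z"
      proof
        assume "p (g z) = g z"
        then have "p (g z) = p z" using Suc z_def by simp
        then have "g z = z" using permutes_inj[OF p] by (simp add: inj_def)
        then show False using noloop zC by simp
      qed
      then show ?case using opts[OF closed[OF zC]] w by simp
    qed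
    show ?thesis
    proof (cases "p c = c")
      case True
      have "p x = x" for x
      proof (cases "x \<in> C")
        case xC: True
        show ?thesis
        proof (rule ccontr)
          assume "p x \<noteq> x"
          then have "p x = g x" using opts xC by auto
          obtain m where "(g ^^ m) x = c" using reach xC by auto
          then have "p c = g c" using propg[OF xC \<open>p x = g x\<close>, of m] by simp
          then show False using True gc by simp
        qed
      next
        case False then show ?thesis using p by (simp add: permutes_not_in)
      qed
      then show ?thesis by (simp add: fun_eq_iff)
    next
      case False
      then have pc: "p c = g c" using opts cC by auto
      have "p x = gC x" for x
      proof (cases "x \<in> C")
        case xC: True
        then obtain k where "x = (g ^^ k) c" using Cdef by auto
        then show ?thesis using propg[OF cC pc, of k] xC by (simp add: gC_def)
      next
        case False then show ?thesis using p by (simp add: permutes_not_in gC_def)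
      qed
      then show ?thesis by (simp add: fun_eq_iff)
    qed
  qed
  have idne: "id \<noteq> gC" using gc cC by (auto simp: gC_def fun_eq_iff intro!: exI[of _ c])
  have "perS C M = sum F ({p. p permutes C} \<inter> {id, gC})"
    unfolding perS_def F_def[symmetric]
    by (rule sum.mono_neutral_right) (use fin char in \<open>auto simp: finite_permutations\<close>)
  also have "\<dots> = F id + (if gC permutes C then F gC else 0)"
    using idne by (cases "gC permutes C") (auto simp: insert_absorb)
  finally have per: "perS C M = F id + (if gC permutes C then F gC else 0)" .
  have Fid: "F id = 1" unfolding F_def M_def using Axx by (simp add: idm_def)
  define W where "W = (\<Prod>x\<in>C. A x (g x))"
  have FgC: "F gC = (-1) ^ card C * W"
  proof -
    have "F gC = (\<Prod>x\<in>C. (-1) * A x (g x))"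
      unfolding F_def M_def gC_def using noloop by (intro prod.cong) (auto simp: idm_def, metis)
    then show ?thesis unfolding W_def using prod.distrib[of "\<lambda>_. (-1::real)" "\<lambda>x. A x (g x)" C] by simp
  qed
  have W01: "0 \<le> W" "W \<le> 1" unfolding W_def using nonneg closed
    by (auto intro!: prod_nonneg prod_le_1)
  show ?thesis
  proof (cases "even (card C)")
    case True
    have ggc: "g c \<in> C" "g (g c) \<in> C" using closed cC by auto
    have "W = A c (g c) * (\<Prod>x\<in>C - {c}. A x (g x))"
      unfolding W_def using fin cC by (simp add: prod.remove)
    also have "(\<Prod>x\<in>C - {c}. A x (g x)) = A (g c) (g (g c)) * (\<Prod>x\<in>C - {c} - {g c}. A x (g x))"
      using fin ggc gc by (simp add: prod.remove)
    finally have Weq: "W = A c (g c) * (A (g c) (g (g c)) * (\<Prod>x\<in>C - {c} - {g c}. A x (g x)))" .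
    have R: "0 \<le> (\<Prod>x\<in>C - {c} - {g c}. A x (g x))" "(\<Prod>x\<in>C - {c} - {g c}. A x (g x)) \<le> 1"
      using nonneg closed by (auto intro!: prod_nonneg prod_le_1)
    have a: "0 \<le> A c (g c)" "0 \<le> A (g c) (g (g c))" using nonneg cC ggc by auto
    have "W \<le> A c (g c) * A (g c) (g (g c))"
    proof -
      have "A (g c) (g (g c)) * (\<Prod>x\<in>C - {c} - {g c}. A x (g x)) \<le> A (g c) (g (g c))"
        using R a by (intro mult_left_le) auto
      then show ?thesis unfolding Weq using a by (intro mult_left_mono) auto
    qed
    then show ?thesis using True per Fid FgC W01 by (auto simp: M_def)
  next
    case False
    then show ?thesis using per Fid FgC W01 by (auto simp: M_def)
  qed
qed

lemma perS_empty: "perS {} M = 1"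
  unfolding perS_def by simp

lemma perS_sing: "perS {i} M = M i i"
  unfolding perS_def by simp

lemma scale_le: "0 \<le> (a::real) \<Longrightarrow> a \<le> 1 \<Longrightarrow> P \<le> B \<Longrightarrow> 0 \<le> B \<Longrightarrow> a * P \<le> B"
proof (cases "0 \<le> P")
  case True
  assume "0 \<le> a" "a \<le> 1" "P \<le> B"
  then have "a * P \<le> 1 * P" using True by (intro mult_right_mono) auto
  then show ?thesis using \<open>P \<le> B\<close> by simp
next
  case False
  assume "0 \<le> a" "0 \<le> B"
  then have "a * P \<le> 0" using False by (simp add: mult_nonneg_nonpos)
  then show ?thesis using \<open>0 \<le> B\<close> by simp
qed

lemma key:
  fixes A :: "nat \<Rightarrow> nat \<Rightarrow> real"
  assumes "finite S" "\<forall>i\<in>S. \<forall>j\<in>S. 0 \<le> A i j \<and> A i j \<le> 1"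
   "\<forall>i\<in>S. \<forall>j1\<in>S. \<forall>j2\<in>S. 0 < A i j1 \<longrightarrow> 0 < A i j2 \<longrightarrow> j1 = j2"
  shows "\<exists>L m. length L = 2*m \<and> distinct L \<and> set L \<subseteq> {(i,j). i\<in>S \<and> j\<in>S \<and> 0 < A i j}
           \<and> perS S (\<lambda>i j. idm i j - A i j) \<le> pair_prod A L m"
  using assms
proof (induction "card S" arbitrary: S rule: less_induct)
  case less
  define M where "M = (\<lambda>i j. idm i j - A i j)"
  have IH: "\<And>S'. S' \<subseteq> S \<Longrightarrow> S' \<noteq> S \<Longrightarrow> \<exists>L m. length L = 2*m \<and> distinct L \<and>
      set L \<subseteq> {(i,j). i\<in>S' \<and> j\<in>S' \<and> 0 < A i j} \<and> perS S' M \<le> pair_prod A L m"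
  proof -
    fix S' assume "S' \<subseteq> S" "S' \<noteq> S"
    then have "card S' < card S" using less.prems(1) by (meson psubsetI psubset_card_mono)
    then show "\<exists>L m. length L = 2*m \<and> distinct L \<and>
      set L \<subseteq> {(i,j). i\<in>S' \<and> j\<in>S' \<and> 0 < A i j} \<and> perS S' M \<le> pair_prod A L m"
      unfolding M_def
    proof (intro less.hyps)
      show "finite S'" using less.prems(1) \<open>S' \<subseteq> S\<close> finite_subset by blast
      show "\<forall>i\<in>S'. \<forall>j\<in>S'. 0 \<le> A i j \<and> A i j \<le> 1" using less.prems(2) \<open>S' \<subseteq> S\<close> by blast
      show "\<forall>i\<in>S'. \<forall>j1\<in>S'. \<forall>j2\<in>S'. 0 < A i j1 \<longrightarrow> 0 < A i j2 \<longrightarrow> j1 = j2"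
        using less.prems(3) \<open>S' \<subseteq> S\<close> by blast
    qed
  qed
  have ge1: "1 \<le> pair_prod A L m" if "length L = 2*m" "set L \<subseteq> {(i,j). i\<in>X \<and> j\<in>X \<and> 0 < A i j}" for L m X
    using that by (intro pair_prod_ge1) auto
  show ?case
  proof (cases "S = {}")
    case True
    then show ?thesis by (intro exI[of _ "[]"] exI[of _ 0]) (simp add: perS_empty pair_prod_def)
  next
    case Sne: False
    show ?thesis
    proof (cases "\<exists>i\<in>S. \<forall>j\<in>S. \<not> 0 < A i j")
      case True
      then obtain i where i: "i \<in> S" "\<forall>j\<in>S. \<not> 0 < A i j" by auto
      have "perS S M = perS {i} M * perS (S - {i}) M"
        by (rule perS_block) (use less.prems i in \<open>auto simp: M_def idm_def\<close>, force)
      also have "perS {i} M = 1" using i less.prems(2) by (force simp: perS_sing M_def idm_def)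
      finally have eq: "perS S M = perS (S - {i}) M" by simp
      obtain L m where L: "length L = 2*m" "distinct L"
        "set L \<subseteq> {(i',j). i'\<in>S-{i} \<and> j\<in>S-{i} \<and> 0 < A i' j}" "perS (S-{i}) M \<le> pair_prod A L m"
        using IH[of "S - {i}"] i by auto
      show ?thesis using L eq unfolding M_def by (intro exI[of _ L] exI[of _ m]) auto
    next
      case False
      then have ex: "\<forall>i\<in>S. \<exists>j\<in>S. 0 < A i j" by auto
      define g where "g i = (SOME j. j \<in> S \<and> 0 < A i j)" for i
      have g: "g i \<in> S \<and> 0 < A i (g i)" if "i \<in> S" for i
        using someI_ex[of "\<lambda>j. j \<in> S \<and> 0 < A i j"] ex that unfolding g_def by auto
      have guniq: "j = g i" if "i \<in> S" "j \<in> S" "0 < A i j" for i j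
        using less.prems(3) g that by blast
      obtain a where "a \<in> S" using Sne by auto
      then obtain c L where c: "c \<in> S" "L > 0" "(g ^^ L) c = c"
        using periodic_point[OF less.prems(1) _ ] g by blast
      define C where "C = range (\<lambda>k. (g ^^ k) c)"
      have iterS: "(g ^^ k) c \<in> S" for k by (induction k) (use c g in auto)
      have CS: "C \<subseteq> S" unfolding C_def using iterS by auto
      have cC: "c \<in> C" unfolding C_def by (metis funpow_0 rangeI)
      have closed: "g x \<in> C" if "x \<in> C" for x
      proof -
        obtain k where "x = (g ^^ k) c" using \<open>x \<in> C\<close> C_def by auto
        then have "g x = (g ^^ Suc k) c" by simp
        then show ?thesis unfolding C_def by (metis rangeI)
      qed
      have finC: "finite C" using CS less.prems(1) finite_subset by blast
      have blk: "perS S M = perS C M * perS (S - C) M"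
      proof (rule perS_block[OF less.prems(1) CS])
        show "\<forall>i\<in>C. \<forall>j\<in>S - C. M i j = 0"
        proof (intro ballI)
          fix i j assume ij: "i \<in> C" "j \<in> S - C"
          have "\<not> 0 < A i j" using guniq[of i j] closed[OF ij(1)] ij CS by auto
          then have "A i j = 0" using less.prems(2) ij CS by force
          then show "M i j = 0" using ij by (auto simp: M_def idm_def)
        qed
      qed
      obtain L2 m2 where L2: "length L2 = 2*m2" "distinct L2"
        "set L2 \<subseteq> {(i',j). i'\<in>S-C \<and> j\<in>S-C \<and> 0 < A i' j}" "perS (S-C) M \<le> pair_prod A L2 m2"
        using IH[of "S - C"] cC CS by auto
      have B2: "1 \<le> pair_prod A L2 m2" using ge1[OF L2(1) L2(3)] .
      have setL2: "set L2 \<subseteq> {(i,j). i\<in>S \<and> j\<in>S \<and> 0 < A i j}" using L2(3) by auto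
      show ?thesis
      proof (cases "g c = c")
        case True
        have "(g ^^ k) c = c" for k by (induction k) (use True in auto)
        then have "C = {c}" unfolding C_def by auto
        then have pc: "perS C M = 1 - A c c" by (simp add: perS_sing M_def idm_def)
        have "perS S M \<le> pair_prod A L2 m2"
          unfolding blk pc using less.prems(2) c L2(4) B2 by (intro scale_le) auto
        then show ?thesis using L2 setL2 unfolding M_def by (intro exI[of _ L2] exI[of _ m2]) auto
      next
        case gc: False
        have cyc: "0 \<le> perS C M \<and>
          perS C M \<le> (if even (card C) then 1 + A c (g c) * A (g c) (g (g c)) else 1)"
          unfolding M_def
        proof (rule cycle_perS[OF finC C_def c(2) c(3) gc])
          show "\<forall>i\<in>C. \<forall>j\<in>C. 0 \<le> A i j \<and> A i j \<le> 1" using less.prems(2) CS by blast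
          show "\<forall>i\<in>C. \<forall>j\<in>C. 0 < A i j \<longrightarrow> j = g i" using guniq CS by blast
        qed
        show ?thesis
        proof (cases "even (card C)")
          case False
          then have "perS S M \<le> pair_prod A L2 m2"
            unfolding blk using cyc L2(4) B2 by (intro scale_le) auto
          then show ?thesis using L2 setL2 unfolding M_def by (intro exI[of _ L2] exI[of _ m2]) auto
        next
          case True
          define a1 where "a1 = (c, g c)"
          define a2 where "a2 = (g c, g (g c))"
          have gcC: "g c \<in> C" "g (g c) \<in> C" using closed cC by auto
          have "perS S M \<le> (1 + A c (g c) * A (g c) (g (g c))) * pair_prod A L2 m2"
          proof -
            have "perS C M * perS (S - C) M \<le> perS C M * pair_prod A L2 m2"
              using cyc L2(4) by (intro mult_left_mono) auto
            also have "\<dots> \<le> (1 + A c (g c) * A (g c) (g (g c))) * pair_prod A L2 m2"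
              using cyc True B2 by (intro mult_right_mono) auto
            finally show ?thesis unfolding blk .
          qed
          also have "\<dots> = pair_prod A (a1 # a2 # L2) (Suc m2)"
            unfolding pair_prod_cons2 a1_def a2_def by simp
          finally have P: "perS S M \<le> pair_prod A (a1 # a2 # L2) (Suc m2)" .
          have d: "distinct (a1 # a2 # L2)"
            using L2(2,3) gc cC gcC unfolding a1_def a2_def by auto
          have s: "set (a1 # a2 # L2) \<subseteq> {(i,j). i\<in>S \<and> j\<in>S \<and> 0 < A i j}"
            using setL2 g c gcC CS unfolding a1_def a2_def by auto
          show ?thesis using P d s L2(1) unfolding M_def
            by (intro exI[of _ "a1 # a2 # L2"] exI[of _ "Suc m2"]) auto
        qed
      qed
    qed
  qed
qed

theorem mainTheorem8:
  fixes n :: nat and A :: "nat \<Rightarrow> nat \<Rightarrow> real"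
  assumes "row_substochastic n A"
    and "\<forall>i<n. card {j. j < n \<and> 0 < A i j} \<le> 1"
  shows "(\<forall>t. card (pos_entries n A) = 2*t \<longrightarrow>
            (\<exists>ps. distinct ps \<and> set ps = pos_entries n A \<and>
               per n (\<lambda>i j. idm i j - A i j) \<le> pair_prod A ps t))
       \<and> (\<forall>t. card (pos_entries n A) = 2*t + 1 \<longrightarrow>
            (\<exists>ps. distinct ps \<and> set ps = pos_entries n A \<and>
               per n (\<lambda>i j. idm i j - A i j)
                 < pair_prod A ps t * (1 + (A (fst (ps ! (2*t))) (snd (ps ! (2*t))))^2 / 4)))"
proof -
  have nn: "\<forall>i<n. \<forall>j<n. 0 \<le> A i j" and rs: "\<forall>i<n. (\<Sum>j<n. A i j) \<le> 1"
    using assms(1) unfolding row_substochastic_def by auto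
  have le1: "A i j \<le> 1" if "i < n" "j < n" for i j
  proof -
    have "A i j \<le> (\<Sum>j<n. A i j)" using nn that by (intro member_le_sum) auto
    then show ?thesis using rs that by auto
  qed
  have uq: "j1 = j2" if "i < n" "j1 < n" "j2 < n" "0 < A i j1" "0 < A i j2" for i j1 j2
  proof -
    have "card {j. j < n \<and> 0 < A i j} \<le> Suc 0" using assms(2) that by auto
    then have "\<forall>a\<in>{j. j < n \<and> 0 < A i j}. \<forall>b\<in>{j. j < n \<and> 0 < A i j}. a = b"
      by (subst card_le_Suc0_iff_eq[symmetric]) auto
    then show ?thesis using that by auto
  qed
  obtain L m where L: "length L = 2*m" "distinct L"
    "set L \<subseteq> {(i,j). i\<in>{..<n} \<and> j\<in>{..<n} \<and> 0 < A i j}"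
    "perS {..<n} (\<lambda>i j. idm i j - A i j) \<le> pair_prod A L m"
    using key[of "{..<n}" A] nn le1 uq by auto
  define P where "P = pos_entries n A"
  have PS: "{(i,j). i\<in>{..<n} \<and> j\<in>{..<n} \<and> 0 < A i j} = P"
    unfolding P_def pos_entries_def by auto
  have finP: "finite P"
  proof -
    have "P \<subseteq> {..<n} \<times> {..<n}" unfolding P_def pos_entries_def by auto
    then show ?thesis by (rule finite_subset) auto
  qed
  obtain R where R: "set R = P - set L" "distinct R"
    using finite_distinct_list[of "P - set L"] finP by auto
  define ps where "ps = L @ R"
  have dps: "distinct ps" using L(2) R unfolding ps_def by auto
  have sps: "set ps = P" using L(3) R PS unfolding ps_def by auto
  have lps: "length ps = card P" using distinct_card[OF dps] sps by simp
  have nps: "\<forall>x\<in>set ps. 0 \<le> A (fst x) (snd x)" using sps unfolding P_def pos_entries_def by auto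
  have perq: "per n (\<lambda>i j. idm i j - A i j) = perS {..<n} (\<lambda>i j. idm i j - A i j)"
    unfolding per_def perS_def by simp
  have mle: "2*m \<le> card P" using L(1,2,3) PS distinct_card[OF L(2)] card_mono[OF finP]
    by (metis)
  show ?thesis
  proof (intro conjI allI impI)
    fix t assume t: "card (pos_entries n A) = 2*t"
    have "pair_prod A L m \<le> pair_prod A ps t"
      unfolding ps_def using L(1) mle t lps nps unfolding P_def ps_def
      by (intro pair_prod_ext) auto
    then show "\<exists>ps. distinct ps \<and> set ps = pos_entries n A \<and>
               per n (\<lambda>i j. idm i j - A i j) \<le> pair_prod A ps t"
      using dps sps L(4) perq unfolding P_def by (intro exI[of _ ps]) auto
  next
    fix t assume t: "card (pos_entries n A) = 2*t + 1"
    have "pair_prod A L m \<le> pair_prod A ps t"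
      unfolding ps_def using L(1) mle t lps nps unfolding P_def ps_def
      by (intro pair_prod_ext) auto
    have "2*t < length ps" using lps t unfolding P_def by simp
    then have "ps ! (2*t) \<in> P" using sps nth_mem by blast
    then have pos: "0 < A (fst (ps ! (2*t))) (snd (ps ! (2*t)))"
      unfolding P_def pos_entries_def by auto
    have g1: "1 \<le> pair_prod A ps t" using lps t nps unfolding P_def by (intro pair_prod_ge1) auto
    have "pair_prod A ps t < pair_prod A ps t * (1 + (A (fst (ps ! (2*t))) (snd (ps ! (2*t))))^2 / 4)"
      using g1 pos by (simp add: mult_less_cancel_left1)
    then show "\<exists>ps. distinct ps \<and> set ps = pos_entries n A \<and>
               per n (\<lambda>i j. idm i j - A i j)
                 < pair_prod A ps t * (1 + (A (fst (ps ! (2*t))) (snd (ps ! (2*t))))^2 / 4)"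
      using dps sps L(4) perq \<open>pair_prod A L m \<le> pair_prod A ps t\<close> unfolding P_def
      by (intro exI[of _ ps]) auto
  qed
qed

end
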